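(* Consider the scalar model $x=y+w$ with $w\sim\mathcal{N}(0,1)$ independent of $y$, and the prior $y\sim\mathcal{N}(0,\rho)$, where $\rho>0$ is an SNR parameter. A linear estimator $\hat y = a\,x$ is learned from $N$ i.i.d. training samples $y_1,\dots,y_N$ drawn from this prior, with full knowledge of the measurement model (infinitely many measurements per sample, $M\to\infty$). The linear bias constrained estimator with hyperparameter $\lambda\geq 0$, denoted $\mathrm{LBCE}(\lambda)$, uses the coefficient $$a_{\mathrm{LBCE}}(\lambda)=\frac{\overline{y^2}}{\overline{y^2}+\frac{1}{\lambda+1}},\qquad \overline{y^2}=\frac{1}{N}\sum_{i=1}^N y_i^2 .$$ Let $\mathrm{BMSE}_N$ denote the Bayesian mean squared error $\mathrm{E}\left[(a_{\mathrm{LBCE}}(\lambda)\,x-y)^2\right]$, where the expectation is over $y\sim\mathcal{N}(0,\rho)$, over $w$, and also over the random sampling of the training set $y_1,\dots,y_N$. Then, for a large enough $\rho$, there exists $\lambda^*>0$ such that $\mathrm{LBCE}(\lambda^* )$ yields a smaller $\mathrm{BMSE}_N$ than that of $\mathrm{LBCE}(\lambda=0)$.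
   Context: Semi data-driven setting: the likelihood $p(x|y)$ is known exactly, $y$ is random but its prior is only partially known through a finite dataset of $N$ samples. $\mathrm{LBCE}(\lambda=0)$ coincides with the linear MMSE estimator fitted to the empirical prior. The bias constrained objective is the empirical mean squared error plus $\lambda$ times the empirical squared bias. *)

theory Defs
  imports "HOL-Probability.Probability"
begin

(* Gaussian law N(0,v) with variance v (normal_density takes the standard deviation) *)
definition gauss :: "real \<Rightarrow> real measure" where
  "gauss v = density lborel (normal_density 0 (sqrt v))"

definition emp_sq :: "nat \<Rightarrow> (nat \<Rightarrow> real) \<Rightarrow> real" where
  "emp_sq N ys = (\<Sum>i<N. (ys i)\<^sup>2) / real N"

definition a_LBCE :: "real \<Rightarrow> real \<Rightarrow> real" where
  "a_LBCE lam s = s / (s + 1 / (lam + 1))"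

(* Bayesian MSE, averaged over the training set ys (N i.i.d. N(0,rho) samples),
   the test prior y ~ N(0,rho) and the noise w ~ N(0,1); as an extended nonnegative
   real (nonnegative integral), so an infinite BMSE is represented faithfully. *)
definition BMSE :: "nat \<Rightarrow> real \<Rightarrow> real \<Rightarrow> ennreal" where
  "BMSE N rho lam =
     (\<integral>\<^sup>+ ys. (\<integral>\<^sup>+ y. (\<integral>\<^sup>+ w.
        ennreal ((a_LBCE lam (emp_sq N ys) * (y + w) - y)\<^sup>2) \<partial>gauss 1) \<partial>gauss rho)
      \<partial>(PiM {..<N} (\<lambda>_. gauss rho)))"

end

theory Submission
  imports Defs
begin


lemma gauss_space[simp]: "space (gauss v) = UNIV"
  by (simp add: gauss_def)
lemma gauss_sets[simp]: "sets (gauss v) = sets borel"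
  by (simp add: gauss_def)
lemma gauss_prob: "0 < v \<Longrightarrow> prob_space (gauss v)"
  unfolding gauss_def by (rule prob_space_normal_density) simp

lemma gauss_m1:
  assumes v: "0 < v"
  shows "has_bochner_integral (gauss v) (\<lambda>x. x) 0"
proof -
  have s: "0 < sqrt v" using v by simp
  have "has_bochner_integral lborel (\<lambda>x. normal_density 0 (sqrt v) x * (x - 0)^(2*0+1)) 0"
    by (rule normal_moment_odd[OF s])
  then have "has_bochner_integral lborel (\<lambda>x. normal_density 0 (sqrt v) x *\<^sub>R x) 0" by simp
  then show ?thesis unfolding gauss_def
    by (subst has_bochner_integral_density) auto
qed

lemma gauss_m2:
  assumes v: "0 < v"
  shows "has_bochner_integral (gauss v) (\<lambda>x. x\<^sup>2) v"
proof -
  have s: "0 < sqrt v" using v by simp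
  have "has_bochner_integral lborel (\<lambda>x. normal_density 0 (sqrt v) x * (x - 0)^(2*1))
      (fact (2 * 1) / ((2 / (sqrt v)\<^sup>2)^1 * fact 1))"
    by (rule normal_moment_even[OF s])
  then have "has_bochner_integral lborel (\<lambda>x. normal_density 0 (sqrt v) x *\<^sub>R x\<^sup>2) v"
    using v by simp
  then show ?thesis unfolding gauss_def
    by (subst has_bochner_integral_density) auto
qed



lemma hb_nn:
  assumes "has_bochner_integral M f x" "\<And>y. 0 \<le> f y"
  shows "(\<integral>\<^sup>+ y. ennreal (f y) \<partial>M) = ennreal x"
  using nn_integral_eq_integral[of M f] assms by (simp add: has_bochner_integral_iff)

lemma hb_const_gauss: fixes c :: real assumes "0 < v" shows "has_bochner_integral (gauss v) (\<lambda>_. c) c"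
proof -
  interpret prob_space "gauss v" by (rule gauss_prob[OF assms])
  show ?thesis using prob_space by (simp add: has_bochner_integral_iff)
qed

lemma nn_gauss_quad:
  assumes v: "0 < v"
  shows "(\<integral>\<^sup>+ w. ennreal ((p + q * w)\<^sup>2) \<partial>gauss v) = ennreal (p\<^sup>2 + q\<^sup>2 * v)"
proof -
  have eq: "(\<lambda>w. (p + q * w)\<^sup>2) = (\<lambda>w. p\<^sup>2 + (2*p*q) * w + q\<^sup>2 * w\<^sup>2)"
    by (auto simp: power2_eq_square algebra_simps)
  have "has_bochner_integral (gauss v) (\<lambda>w. p\<^sup>2 + (2*p*q) * w + q\<^sup>2 * w\<^sup>2) (p\<^sup>2 + (2*p*q) * 0 + q\<^sup>2 * v)"
    by (intro has_bochner_integral_add has_bochner_integral_mult_right gauss_m1[OF v] gauss_m2[OF v]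
        hb_const_gauss[OF v])
  then have hb: "has_bochner_integral (gauss v) (\<lambda>w. (p + q * w)\<^sup>2) (p\<^sup>2 + q\<^sup>2 * v)"
    by (simp add: eq)
  show ?thesis by (rule hb_nn[OF hb]) simp
qed

lemma nn_gauss_sq:
  assumes v: "0 < v" and "0 \<le> p" "0 \<le> q"
  shows "(\<integral>\<^sup>+ y. ennreal (p + q * y\<^sup>2) \<partial>gauss v) = ennreal (p + q * v)"
proof -
  have "has_bochner_integral (gauss v) (\<lambda>y. p + q * y\<^sup>2) (p + q * v)"
    by (intro has_bochner_integral_add has_bochner_integral_mult_right gauss_m2[OF v]
        hb_const_gauss[OF v])
  then show ?thesis by (rule hb_nn) (use assms in simp)
qed

definition Gf :: "real \<Rightarrow> real \<Rightarrow> real \<Rightarrow> real" where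
  "Gf lam rho s = (a_LBCE lam s - 1)\<^sup>2 * rho + (a_LBCE lam s)\<^sup>2"

lemma BMSE_eq:
  assumes rho: "0 < rho"
  shows "BMSE N rho lam = (\<integral>\<^sup>+ ys. ennreal (Gf lam rho (emp_sq N ys)) \<partial>(PiM {..<N} (\<lambda>_. gauss rho)))"
proof -
  have inner: "(\<integral>\<^sup>+ y. (\<integral>\<^sup>+ w. ennreal ((a * (y + w) - y)\<^sup>2) \<partial>gauss 1) \<partial>gauss rho)
     = ennreal ((a - 1)\<^sup>2 * rho + a\<^sup>2)" for a :: real
  proof -
    have "(\<integral>\<^sup>+ w. ennreal ((a * (y + w) - y)\<^sup>2) \<partial>gauss 1) = ennreal (a\<^sup>2 + (a - 1)\<^sup>2 * y\<^sup>2)" for y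
      proof -
      have "(a * (y + w) - y)\<^sup>2 = ((a - 1) * y + a * w)\<^sup>2" for w by (simp add: algebra_simps)
      then show ?thesis using nn_gauss_quad[of 1 "(a - 1) * y" a] by (simp add: power_mult_distrib mult.commute)
    qed
    then have "(\<integral>\<^sup>+ y. (\<integral>\<^sup>+ w. ennreal ((a * (y + w) - y)\<^sup>2) \<partial>gauss 1) \<partial>gauss rho)
       = (\<integral>\<^sup>+ y. ennreal (a\<^sup>2 + (a - 1)\<^sup>2 * y\<^sup>2) \<partial>gauss rho)"
      by simp
    also have "\<dots> = ennreal (a\<^sup>2 + (a - 1)\<^sup>2 * rho)"
      by (rule nn_gauss_sq[OF rho]) auto
    finally show ?thesis by (simp add: add.commute)
  qed
  show ?thesis unfolding BMSE_def Gf_def using inner by simp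
qed



definition Af :: "real \<Rightarrow> real \<Rightarrow> real \<Rightarrow> real" where
  "Af c e t = (t + e) * (t + c * e)"
definition Bf :: "real \<Rightarrow> real \<Rightarrow> real \<Rightarrow> real" where
  "Bf c e t = (1 + c) * (1 - e) * t - 2 * t\<^sup>2 + 2 * c * e"
definition Kf :: "real \<Rightarrow> real \<Rightarrow> real \<Rightarrow> real" where
  "Kf c e t = t * Bf c e t / (Af c e t)\<^sup>2"
definition Wf :: "real \<Rightarrow> real \<Rightarrow> real \<Rightarrow> real" where
  "Wf c e t = -(1+c)*t^4 + 2*c*t^3 - (1+c-2*t)*((1+c)*t + c*e)*(Af c e t + t\<^sup>2)"

lemma K_W:
  assumes "0 < t" "0 < e" "0 < c"
  shows "Kf c e t - (1 + c - 2*t) / t\<^sup>2 = e * Wf c e t / (t\<^sup>2 * (Af c e t)\<^sup>2)"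
proof -
  have A: "Af c e t > 0" using assms unfolding Af_def by (simp add: mult_pos_pos add_pos_pos)
  show ?thesis using A assms unfolding Kf_def Wf_def
    by (simp add: field_simps Af_def Bf_def) (simp add: algebra_simps power2_eq_square power4_eq_xxxx power3_eq_cube)
qed

lemma W_lb:
  assumes t: "1/4 \<le> t" and e: "0 < e" "e \<le> 1" and c: "0 \<le> c" "c \<le> 1"
  shows "Wf c e t \<ge> -20000 * t^6"
proof -
  define X where "X = ((1+c)*t + c*e) * (Af c e t + t\<^sup>2)"
  have t0: "0 < t" using t by simp
  have h1a: "0 \<le> (1+c)*t + c*e" using t0 e c by simp
  have h1b: "(1+c)*t + c*e \<le> 6*t"
  proof -
    have "(1+c)*t \<le> 2*t" using c t0 by (simp add: mult_right_mono)
    moreover have "c*e \<le> 1" using c e by (simp add: mult_le_one)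
    ultimately show ?thesis using t by linarith
  qed
  have a1: "0 \<le> t + e" "t + e \<le> 5*t" using t e by simp_all
  have a2: "0 \<le> t + c*e" "t + c*e \<le> 5*t" using t e c mult_le_one[of c e] by simp_all
  have h2a: "0 \<le> Af c e t" unfolding Af_def using a1 a2 by simp
  have h2b: "Af c e t \<le> 25*t\<^sup>2"
  proof -
    have "Af c e t \<le> (5*t)*(5*t)" unfolding Af_def using a1 a2 by (intro mult_mono) auto
    then show ?thesis by (simp add: power2_eq_square)
  qed
  have h3a: "0 \<le> X" unfolding X_def using h1a h2a by simp
  have h3b: "X \<le> (6*t)*(26*t\<^sup>2)" unfolding X_def using h1a h1b h2a h2b
    by (intro mult_mono) auto
  have t3: "1/64 \<le> t^3"
  proof -
    have "(1/4::real)^3 \<le> t^3" using t by (intro power_mono) auto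
    then show ?thesis by (simp add: power_divide)
  qed
  have h4: "t^3 \<le> 64 * t^6"
  proof -
    have "t^3 * 1 \<le> t^3 * (64 * t^3)" using t3 t0 by (intro mult_left_mono) auto
    then show ?thesis by (simp add: power_add[symmetric] mult.commute)
  qed
  have t2: "1/16 \<le> t^2"
  proof -
    have "(1/4::real)^2 \<le> t^2" using t by (intro power_mono) auto
    then show ?thesis by (simp add: power_divide)
  qed
  have h5: "t^4 \<le> 16 * t^6"
  proof -
    have "t^4 * 1 \<le> t^4 * (16 * t^2)" using t2 t0 by (intro mult_left_mono) auto
    then show ?thesis by (simp add: power_add[symmetric] mult.commute)
  qed
  have w1: "Wf c e t \<ge> -(1+c)*t^4 - (1+c)*X"
  proof -
    have "0 \<le> 2*c*t^3" using c t0 by simp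
    moreover have "0 \<le> 2*t*X" using t0 h3a by simp
    moreover have "Wf c e t = -(1+c)*t^4 + 2*c*t^3 - (1+c)*X + 2*t*X"
      unfolding Wf_def X_def by (simp add: algebra_simps)
    ultimately show ?thesis by linarith
  qed
  have w2: "(1+c)*t^4 \<le> 2*t^4" using c t0 by (simp add: mult_right_mono)
  have w3: "(1+c)*X \<le> 2*X" using c h3a by (simp add: mult_right_mono)
  have "X \<le> 156 * t^3" using h3b by (simp add: power2_eq_square power3_eq_cube)
  then show ?thesis using w1 w2 w3 h4 h5 by linarith
qed

lemma K3:
  assumes t: "1/4 \<le> t" and e: "0 < e" "e \<le> 1" and c: "0 < c" "c \<le> 1"
  shows "Kf c e t \<ge> (1 + c - 2*t) / t\<^sup>2 - 20000 * e"
proof -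
  have t0: "0 < t" using t by simp
  have A0: "Af c e t > 0" using t0 e c unfolding Af_def by (simp add: mult_pos_pos add_pos_pos)
  have At: "t\<^sup>2 \<le> Af c e t" unfolding Af_def power2_eq_square using t0 e c
    by (intro mult_mono) auto
  have At2: "t^4 \<le> (Af c e t)\<^sup>2"
  proof -
    have "(t\<^sup>2)\<^sup>2 \<le> (Af c e t)\<^sup>2" using At t0 by (intro power_mono) auto
    then show ?thesis by simp
  qed
  have W: "Wf c e t \<ge> -20000 * t^6" using W_lb[OF t e] c by simp
  have D: "0 < t\<^sup>2 * (Af c e t)\<^sup>2" using t0 A0 by simp
  have "-20000 * e * (t\<^sup>2 * (Af c e t)\<^sup>2) \<le> e * Wf c e t"
  proof -
    have m: "t\<^sup>2 * t^4 \<le> t\<^sup>2 * (Af c e t)\<^sup>2" by (rule mult_left_mono[OF At2]) simp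
    have "20000 * e * (t\<^sup>2 * t^4) \<le> 20000 * e * (t\<^sup>2 * (Af c e t)\<^sup>2)"
      by (rule mult_left_mono[OF m]) (use e in simp)
    then have "-20000 * e * (t\<^sup>2 * (Af c e t)\<^sup>2) \<le> -20000 * e * (t\<^sup>2 * t^4)" by linarith
    also have "\<dots> = e * (-20000 * t^6)" by (simp add: power_add[symmetric] algebra_simps)
    also have "\<dots> \<le> e * Wf c e t" using W e by (intro mult_left_mono) auto
    finally show ?thesis .
  qed
  then have "-20000 * e \<le> e * Wf c e t / (t\<^sup>2 * (Af c e t)\<^sup>2)"
    using D by (simp add: le_divide_eq)
  then show ?thesis using K_W[OF t0 e(1) c(1)] by linarith
qed

lemma B_lb:
  assumes t: "0 \<le> t" "t \<le> 1/4" and e: "0 \<le> e" and c: "0 \<le> c" and ce: "3/2 \<le> (1+c)*(1-e)"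
  shows "t \<le> Bf c e t"
proof -
  have "t * 1 \<le> t * ((1+c)*(1-e) - 2*t)" using t ce by (intro mult_left_mono) auto
  moreover have "0 \<le> 2*c*e" using c e by simp
  ultimately show ?thesis unfolding Bf_def by (simp add: power2_eq_square algebra_simps)
qed

lemma K0:
  assumes t: "0 \<le> t" "t \<le> 1/4" and e: "0 \<le> e" and c: "0 \<le> c" and ce: "3/2 \<le> (1+c)*(1-e)"
  shows "0 \<le> Kf c e t"
  using B_lb[OF assms] t unfolding Kf_def by simp

lemma K2:
  assumes t: "0 \<le> t" "t \<le> 1/4" and e: "0 < e" and c: "0 \<le> c" "c \<le> 1" and ce: "3/2 \<le> (1+c)*(1-e)"
    and et: "e \<le> t\<^sup>2"
  shows "2 \<le> Kf c e t"
proof -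
  have B: "t \<le> Bf c e t" using B_lb[OF t less_imp_le[OF e] c(1) ce] .
  have t0: "0 < t" using et e t by (cases "t = 0") auto
  have A0: "Af c e t > 0" using t0 e c unfolding Af_def by (simp add: mult_pos_pos add_pos_nonneg)
  have e4: "e \<le> t / 4"
  proof -
    have "t * t \<le> t * (1/4)" using t by (intro mult_left_mono) auto
    then show ?thesis using et by (simp add: power2_eq_square)
  qed
  have a1: "t + e \<le> 5/4 * t" using e4 by simp
  have a2: "t + c*e \<le> 5/4 * t"
  proof -
    have "c*e \<le> 1*e" using c e by (intro mult_right_mono) auto
    then show ?thesis using e4 by linarith
  qed
  have A: "Af c e t \<le> (5/4*t) * (5/4*t)" unfolding Af_def using a1 a2 t0 e c
    by (intro mult_mono) auto
  have A2: "(Af c e t)\<^sup>2 \<le> ((5/4*t) * (5/4*t))\<^sup>2" using A A0 by (intro power_mono) auto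
  have tt: "t\<^sup>2 \<le> 1/16"
  proof -
    have "t\<^sup>2 \<le> (1/4)\<^sup>2" using t by (intro power_mono) auto
    then show ?thesis by (simp add: power_divide)
  qed
  have "2 * (Af c e t)\<^sup>2 \<le> 2 * ((5/4*t) * (5/4*t))\<^sup>2" using A2 by simp
  also have "\<dots> = (625/128) * t\<^sup>2 * t\<^sup>2" by (simp add: power2_eq_square)
  also have "\<dots> \<le> t\<^sup>2" 
  proof -
    have "(625/128) * t\<^sup>2 * t\<^sup>2 \<le> 1 * t\<^sup>2" using tt by (intro mult_right_mono) auto
    then show ?thesis by simp
  qed
  also have "\<dots> \<le> t * Bf c e t" using B t0 by (simp add: power2_eq_square mult_left_mono)
  finally show ?thesis unfolding Kf_def using A0 by (simp add: le_divide_eq)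
qed

lemma Kpw:
  assumes e: "0 < e" "e \<le> 1/16" and t: "0 \<le> t"
  shows "Kf (1-e) e t - 2*(1-t) \<ge> indicator {1/4..1/2} t - 2 * indicator {..<sqrt e} t - 20016*e"
proof -
  have ce: "3/2 \<le> (1+(1-e))*(1-e)"
  proof -
    have "(1+(1-e))*(1-e) = 2 - 3*e + e*e" by (simp add: algebra_simps)
    moreover have "0 \<le> e*e" by simp
    ultimately show ?thesis using e by linarith
  qed
  have se: "sqrt e \<le> 1/4"
  proof -
    have "sqrt e \<le> sqrt (1/16)" using e by (simp only: real_sqrt_le_iff)
    also have "sqrt (1/16) = (1/4::real)" by (simp add: real_sqrt_divide)
    finally show ?thesis .
  qed
  show ?thesis
  proof (cases "t < sqrt e")
    case True
    then have "t \<le> 1/4" using se by simp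
    then have "0 \<le> Kf (1-e) e t" using K0[OF t _ _ _ ce] e by simp
    moreover have "t \<notin> {1/4..1/2}" using True se by simp
    ultimately show ?thesis using True t e by simp
  next
    case False
    then have nB: "indicator {..<sqrt e} t = (0::real)" by simp
    show ?thesis
    proof (cases "t < 1/4")
      case True
      have et: "e \<le> t\<^sup>2"
      proof -
        have "(sqrt e)\<^sup>2 \<le> t\<^sup>2" using False e by (intro power_mono) auto
        then show ?thesis using e by simp
      qed
      have "2 \<le> Kf (1-e) e t" using K2[OF t _ e(1) _ _ ce et] True e by simp
      moreover have "t \<notin> {1/4..1/2}" using True by simp
      ultimately show ?thesis using nB t e by simp
    next
      case t4: False
      then have t4': "1/4 \<le> t" by simp
      have t0: "0 < t" using t4' by simp
      have k3: "Kf (1-e) e t \<ge> (1 + (1-e) - 2*t) / t\<^sup>2 - 20000 * e"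
        using K3[OF t4' e(1) _ _, of "1-e"] e by simp
      have split: "(1 + (1-e) - 2*t) / t\<^sup>2 - 2*(1-t) = 2*(1-t)\<^sup>2*(1+t)/t\<^sup>2 - e/t\<^sup>2"
        using t0 by (simp add: field_simps power2_eq_square)
      have tt: "1/16 \<le> t\<^sup>2"
      proof -
        have "(1/4)\<^sup>2 \<le> t\<^sup>2" using t4' by (intro power_mono) auto
        then show ?thesis by (simp add: power_divide)
      qed
      have et: "e/t\<^sup>2 \<le> 16*e"
        using tt e by (simp add: divide_le_eq)
      have nn: "0 \<le> 2*(1-t)\<^sup>2*(1+t)/t\<^sup>2" using t by simp
      show ?thesis
      proof (cases "t \<le> 1/2")
        case True
        have a: "1/4 \<le> (1-t)\<^sup>2"
        proof -
          have "(1/2)\<^sup>2 \<le> (1-t)\<^sup>2" using True by (intro power_mono) auto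
          then show ?thesis by (simp add: power_divide)
        qed
        have b: "t\<^sup>2 \<le> 1/4"
        proof -
          have "t\<^sup>2 \<le> (1/2)\<^sup>2" using True t by (intro power_mono) auto
          then show ?thesis by (simp add: power_divide)
        qed
        have "1/2 \<le> 2*(1-t)\<^sup>2*(1+t)"
        proof -
          have "1/4 * 1 \<le> (1-t)\<^sup>2 * (1+t)" using a t by (intro mult_mono) auto
          then show ?thesis by simp
        qed
        then have "2 * t\<^sup>2 \<le> 2*(1-t)\<^sup>2*(1+t)" using b by linarith
        then have "2 \<le> 2*(1-t)\<^sup>2*(1+t)/t\<^sup>2" using t0 by (simp add: le_divide_eq)
        moreover have "indicator {1/4..1/2} t = (1::real)" using True t4' by simp
        ultimately show ?thesis using k3 split et nB e by linarith
      next
        case False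
        then have "indicator {1/4..1/2} t = (0::real)" by simp
        then show ?thesis using k3 split et nB nn e by linarith
      qed
    qed
  qed
qed



lemma Gf_eq:
  assumes "0 \<le> s" "0 \<le> lam" "0 < rho"
  shows "Gf lam rho s = ((1/(lam+1))\<^sup>2 * rho + s\<^sup>2) / (s + 1/(lam+1))\<^sup>2"
proof -
  define c where "c = 1/(lam+1)"
  have c: "0 < c" using assms unfolding c_def by simp
  have sc: "0 < s + c" using c assms by simp
  have "a_LBCE lam s = s / (s + c)" unfolding a_LBCE_def c_def ..
  then have "Gf lam rho s = (s/(s+c) - 1)\<^sup>2 * rho + (s/(s+c))\<^sup>2" unfolding Gf_def by simp
  also have "s/(s+c) - 1 = - (c/(s+c))" using sc by (simp add: field_simps)
  also have "(- (c/(s+c)))\<^sup>2 * rho + (s/(s+c))\<^sup>2 = c\<^sup>2 * rho / (s+c)\<^sup>2 + s\<^sup>2/(s+c)\<^sup>2"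
    by (simp add: power_divide)
  also have "\<dots> = (c\<^sup>2 * rho + s\<^sup>2) / (s + c)\<^sup>2" by (simp add: add_divide_distrib)
  finally show ?thesis unfolding c_def .
qed

lemma D_eq:
  assumes t: "0 \<le> t" and e: "0 < e" "e < 1"
  shows "((1/e) + (t/e)\<^sup>2) / (t/e + 1)\<^sup>2 - ((1-e)\<^sup>2 * (1/e) + (t/e)\<^sup>2) / (t/e + (1-e))\<^sup>2
         = e\<^sup>2 * Kf (1-e) e t"
proof -
  define u where "u = t + e"
  define v where "v = t + (1-e)*e"
  have u: "u > 0" unfolding u_def using t e by simp
  have v: "v > 0" unfolding v_def using t e by (simp add: add_nonneg_pos)
  have q1: "t/e + 1 = u/e" unfolding u_def using e by (simp add: field_simps)
  have q2: "t/e + (1-e) = v/e" unfolding v_def using e by (simp add: field_simps)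
  have L1: "((1/e) + (t/e)\<^sup>2) / (u/e)\<^sup>2 = (e + t\<^sup>2) / u\<^sup>2"
    using e u by (simp add: power_divide field_simps power2_eq_square)
  have L2: "((1-e)\<^sup>2 * (1/e) + (t/e)\<^sup>2) / (v/e)\<^sup>2 = ((1-e)\<^sup>2 * e + t\<^sup>2) / v\<^sup>2"
    using e v by (simp add: power_divide field_simps power2_eq_square)
  have L3: "(e + t\<^sup>2) / u\<^sup>2 - ((1-e)\<^sup>2 * e + t\<^sup>2) / v\<^sup>2
      = ((e + t\<^sup>2) * v\<^sup>2 - ((1-e)\<^sup>2 * e + t\<^sup>2) * u\<^sup>2) / (u\<^sup>2 * v\<^sup>2)"
    using u v by (simp add: diff_frac_eq)
  have P: "(e + t\<^sup>2) * v\<^sup>2 - ((1-e)\<^sup>2 * e + t\<^sup>2) * u\<^sup>2 = e\<^sup>2 * (t * Bf (1-e) e t)"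
    unfolding u_def v_def Bf_def by (simp add: power2_eq_square algebra_simps)
  have AF: "Af (1-e) e t = u * v" unfolding Af_def u_def v_def by (simp add: mult.commute)
  show ?thesis unfolding q1 q2 L1 L2 L3 P Kf_def AF
    by (simp add: power_mult_distrib)
qed



lemma gauss_meas:
  assumes v: "0 < v" and A: "A \<in> sets borel"
  shows "measure (gauss v) A = integral\<^sup>L lborel (\<lambda>x. normal_density 0 (sqrt v) x * indicator A x)"
proof -
  have "measure (gauss v) A = integral\<^sup>L (gauss v) (indicator A)" by simp
  also have "\<dots> = integral\<^sup>L lborel (\<lambda>x. normal_density 0 (sqrt v) x *\<^sub>R indicator A x)"
    unfolding gauss_def by (rule integral_density) (use A in auto)
  finally show ?thesis by simp
qed

lemma nd_upper:
  assumes v: "0 < v"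
  shows "normal_density 0 (sqrt v) x \<le> 1 / sqrt v"
proof -
  have e: "exp (-(x - 0)\<^sup>2 / (2 * (sqrt v)\<^sup>2)) \<le> 1" using v by simp
  have s: "sqrt v \<le> sqrt (2 * pi * (sqrt v)\<^sup>2)"
  proof -
    have "v \<le> 2 * pi * v" using v pi_gt3 by simp
    then show ?thesis using v by simp
  qed
  have "1 / sqrt (2 * pi * (sqrt v)\<^sup>2) \<le> 1 / sqrt v"
    using s v by (intro divide_left_mono) auto
  then have "1 / sqrt (2 * pi * (sqrt v)\<^sup>2) * exp (-(x - 0)\<^sup>2 / (2 * (sqrt v)\<^sup>2)) \<le> (1 / sqrt v) * 1"
    using e v by (intro mult_mono) auto
  then show ?thesis unfolding normal_density_def by simp
qed

lemma nd_lower: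
  assumes v: "0 < v" and x: "x\<^sup>2 \<le> v"
  shows "exp (-1) / (3 * sqrt v) \<le> normal_density 0 (sqrt v) x"
proof -
  have e: "exp (-1) \<le> exp (-(x - 0)\<^sup>2 / (2 * (sqrt v)\<^sup>2))"
    using v x by (simp add: field_simps)
  have s: "sqrt (2 * pi * (sqrt v)\<^sup>2) \<le> 3 * sqrt v"
  proof -
    have "sqrt (2 * pi * (sqrt v)\<^sup>2) = sqrt (2*pi) * sqrt v" using v by (simp add: real_sqrt_mult)
    moreover have "sqrt (2*pi) \<le> 3"
    proof -
      have "2*pi \<le> 3\<^sup>2" using pi_less_4 by simp
      then show ?thesis by (metis real_sqrt_le_iff real_sqrt_pow2_iff real_sqrt_power zero_le_numeral)
    qed
    ultimately show ?thesis using v by (simp add: mult_right_mono)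
  qed
  have p: "0 < sqrt (2 * pi * (sqrt v)\<^sup>2)" using v by simp
  have "1 / (3 * sqrt v) \<le> 1 / sqrt (2 * pi * (sqrt v)\<^sup>2)"
    using s p v by (intro divide_left_mono) (auto intro: mult_pos_pos)
  then have "exp (-1) * (1 / (3 * sqrt v)) \<le> exp (-(x - 0)\<^sup>2 / (2 * (sqrt v)\<^sup>2)) * (1 / sqrt (2 * pi * (sqrt v)\<^sup>2))"
    using e v by (intro mult_mono) auto
  then show ?thesis unfolding normal_density_def by (simp add: mult.commute)
qed

lemma gauss_upper:
  assumes v: "0 < v" and r: "0 \<le> r"
  shows "measure (gauss v) {-r<..<r} \<le> 2 * r / sqrt v"
proof -
  have "measure (gauss v) {-r<..<r} = integral\<^sup>L lborel (\<lambda>x. normal_density 0 (sqrt v) x * indicator {-r<..<r} x)"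
    by (rule gauss_meas[OF v]) simp
  also have "\<dots> \<le> integral\<^sup>L lborel (\<lambda>x. (1 / sqrt v) * indicator {-r<..<r} x)"
  proof (rule integral_mono)
    show "integrable lborel (\<lambda>x. normal_density 0 (sqrt v) x * indicator {-r<..<r} x)"
      by (intro integrable_real_mult_indicator integrable_normal_density) (auto simp: v)
    show "integrable lborel (\<lambda>x. (1 / sqrt v) * indicator {-r<..<r} x)"
      using r by (intro integrable_mult_right integrable_real_indicator) auto
    show "normal_density 0 (sqrt v) x * indicator {-r<..<r} x \<le> (1 / sqrt v) * indicator {-r<..<r} x" for x
      using nd_upper[OF v, of x] by (simp add: indicator_def)
  qed
  also have "\<dots> = 2 * r / sqrt v" using r by simp
  finally show ?thesis .
qed

lemma gauss_lower:
  assumes v: "0 < v"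
  shows "exp (-1) / 18 \<le> measure (gauss v) {sqrt v / 2 .. 2 * sqrt v / 3}"
proof -
  let ?I = "{sqrt v / 2 .. 2 * sqrt v / 3}"
  have "exp (-1) / 18 = integral\<^sup>L lborel (\<lambda>x. (exp (-1) / (3 * sqrt v)) * indicator ?I x)"
    using v by simp
  also have "\<dots> \<le> integral\<^sup>L lborel (\<lambda>x. normal_density 0 (sqrt v) x * indicator ?I x)"
  proof (rule integral_mono)
    show "integrable lborel (\<lambda>x. normal_density 0 (sqrt v) x * indicator ?I x)"
      by (intro integrable_real_mult_indicator integrable_normal_density) (auto simp: v)
    show "integrable lborel (\<lambda>x. (exp (-1) / (3 * sqrt v)) * indicator ?I x)"
      by (intro integrable_mult_right integrable_real_indicator) (auto simp: emeasure_lborel_Icc_eq)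
    show "(exp (-1) / (3 * sqrt v)) * indicator ?I x \<le> normal_density 0 (sqrt v) x * indicator ?I x" for x
    proof (cases "x \<in> ?I")
      case True
      then have "0 \<le> x" "x \<le> sqrt v" using v by auto
      then have "x\<^sup>2 \<le> (sqrt v)\<^sup>2" by (intro power_mono) auto
      then have "x\<^sup>2 \<le> v" using v by simp
      then show ?thesis using nd_lower[OF v] True by simp
    qed simp
  qed
  also have "\<dots> = measure (gauss v) ?I" by (rule gauss_meas[OF v, symmetric]) simp
  finally show ?thesis .
qed



lemma pps: "0 < rho \<Longrightarrow> product_prob_space (\<lambda>_. gauss rho)"
  unfolding product_prob_space_def product_sigma_finite_def product_prob_space_axioms_def
  using gauss_prob prob_space_imp_sigma_finite by blast

lemma comp_meas: "i \<in> I \<Longrightarrow> (\<lambda>x. x i) \<in> borel_measurable (PiM I (\<lambda>_. gauss rho))"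
proof -
  assume i: "i \<in> I"
  have "(\<lambda>x. x i) \<in> measurable (PiM I (\<lambda>_. gauss rho)) (gauss rho)"
    using i by (rule measurable_component_singleton)
  then show ?thesis using measurable_cong_sets[OF refl gauss_sets] by blast
qed

lemma emp_meas[measurable]: "emp_sq N \<in> borel_measurable (PiM {..<N} (\<lambda>_. gauss rho))"
  unfolding emp_sq_def
  by (intro borel_measurable_divide borel_measurable_sum borel_measurable_power comp_meas borel_measurable_const) auto

lemma pre_sets: "f \<in> borel_measurable M \<Longrightarrow> A \<in> sets borel \<Longrightarrow> {x \<in> space M. f x \<in> A} \<in> sets M"
proof -
  assume f: "f \<in> borel_measurable M" and A: "A \<in> sets borel"
  have "{x \<in> space M. f x \<in> A} = f -` A \<inter> space M" by auto
  then show ?thesis using measurable_sets[OF f A] by simp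
qed

lemma fpps: "0 < rho \<Longrightarrow> finite_product_prob_space (\<lambda>_. gauss rho) {..<(N::nat)}"
  unfolding finite_product_prob_space_def finite_product_sigma_finite_def finite_product_sigma_finite_axioms_def
  using pps[of rho] unfolding product_prob_space_def by auto

lemma emp_nonneg: "0 \<le> emp_sq N ys"
  unfolding emp_sq_def by (simp add: sum_nonneg)

lemma comp_sq:
  assumes rho: "0 < rho" and i: "i < N"
  shows "integrable (PiM {..<N} (\<lambda>_. gauss rho)) (\<lambda>ys. (ys i)\<^sup>2)
     \<and> integral\<^sup>L (PiM {..<N} (\<lambda>_. gauss rho)) (\<lambda>ys. (ys i)\<^sup>2) = rho"
proof -
  let ?M = "PiM {..<N} (\<lambda>_. gauss rho)"
  have d: "distr ?M (gauss rho) (\<lambda>\<omega>. \<omega> i) = gauss rho"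
    using distr_PiM_component[of "{..<N}" "\<lambda>_. gauss rho" i] gauss_prob[OF rho] i by simp
  have m: "(\<lambda>\<omega>. \<omega> i) \<in> measurable ?M (gauss rho)"
    using i by (intro measurable_component_singleton) auto
  have hb: "has_bochner_integral (gauss rho) (\<lambda>x. x\<^sup>2) rho" by (rule gauss_m2[OF rho])
  have "integrable (distr ?M (gauss rho) (\<lambda>\<omega>. \<omega> i)) (\<lambda>x. x\<^sup>2)" using hb d by (simp add: has_bochner_integral_iff)
  have p2: "(\<lambda>x::real. x\<^sup>2) \<in> borel_measurable (gauss rho)"
  proof -
    have b: "(\<lambda>x::real. x\<^sup>2) \<in> borel_measurable borel" by measurable
    have eq: "borel_measurable (gauss rho) = borel_measurable borel"
      using measurable_cong_sets[OF gauss_sets[of rho] refl, of borel] .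
    show ?thesis unfolding eq by (rule b)
  qed
  note * = \<open>integrable (distr ?M (gauss rho) (\<lambda>\<omega>. \<omega> i)) (\<lambda>x. x\<^sup>2)\<close>
  have I: "integrable ?M (\<lambda>ys. (ys i)\<^sup>2)" using * integrable_distr_eq[OF m p2] by simp
  have "integral\<^sup>L (distr ?M (gauss rho) (\<lambda>\<omega>. \<omega> i)) (\<lambda>x. x\<^sup>2) = rho" using hb d by (simp add: has_bochner_integral_iff)
  then have "integral\<^sup>L ?M (\<lambda>ys. (ys i)\<^sup>2) = rho" using integral_distr[OF m p2] by simp
  with I show ?thesis by simp
qed

lemma emp_int:
  assumes rho: "0 < rho" and N: "1 \<le> N"
  shows "integrable (PiM {..<N} (\<lambda>_. gauss rho)) (emp_sq N)
     \<and> integral\<^sup>L (PiM {..<N} (\<lambda>_. gauss rho)) (emp_sq N) = rho"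
proof -
  let ?M = "PiM {..<N} (\<lambda>_. gauss rho)"
  have I: "\<And>i. i \<in> {..<N} \<Longrightarrow> integrable ?M (\<lambda>ys. (ys i)\<^sup>2)" using comp_sq[OF rho] by auto
  have S: "integrable ?M (\<lambda>ys. \<Sum>i<N. (ys i)\<^sup>2)" using I by auto
  have "integral\<^sup>L ?M (\<lambda>ys. \<Sum>i<N. (ys i)\<^sup>2) = (\<Sum>i<N. integral\<^sup>L ?M (\<lambda>ys. (ys i)\<^sup>2))"
    using Bochner_Integration.integral_sum[where I="{..<N}" and M="PiM {..<N} (\<lambda>_. gauss rho)" and f="\<lambda>i ys. (ys i)\<^sup>2"] I by simp
  also have "\<dots> = (\<Sum>i<N. rho)" using comp_sq[OF rho] by (intro sum.cong) auto
  finally have E: "integral\<^sup>L ?M (\<lambda>ys. \<Sum>i<N. (ys i)\<^sup>2) = real N * rho" by simp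
  have eq: "emp_sq N = (\<lambda>ys. (\<Sum>i<N. (ys i)\<^sup>2) / real N)" unfolding emp_sq_def by auto
  show ?thesis unfolding eq using S E N by simp
qed



lemma prob_small:
  assumes rho: "0 < rho" and N: "1 \<le> N" and d: "0 \<le> d"
  shows "measure (PiM {..<N} (\<lambda>_. gauss rho)) {ys \<in> space (PiM {..<N} (\<lambda>_. gauss rho)). emp_sq N ys / rho < d}
     \<le> 2 * sqrt (real N * d)"
proof -
  let ?M = "PiM {..<N} (\<lambda>_. gauss rho)"
  interpret P: product_prob_space "\<lambda>_. gauss rho" "{..<N}" by (rule pps[OF rho])
  define r where "r = sqrt (real N * d * rho)"
  have r0: "0 \<le> r" unfolding r_def using rho d by simp
  have sub: "{ys \<in> space ?M. emp_sq N ys / rho < d} \<subseteq> {ys \<in> space ?M. ys 0 \<in> {-r<..<r}}"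
  proof safe
    fix ys assume ys: "ys \<in> space ?M" and lt: "emp_sq N ys / rho < d"
    have "(ys 0)\<^sup>2 \<le> (\<Sum>i<N. (ys i)\<^sup>2)"
      using N by (intro member_le_sum) auto
    also have "\<dots> = real N * emp_sq N ys" unfolding emp_sq_def using N by simp
    also have "\<dots> < real N * (d * rho)" using lt rho N by (simp add: divide_less_eq)
    finally have "(ys 0)\<^sup>2 < r\<^sup>2" unfolding r_def using rho d by (simp add: mult.assoc)
    then have "\<bar>ys 0\<bar>\<^sup>2 < r\<^sup>2" by simp
    then have "\<bar>ys 0\<bar> < r" using r0 by (rule power2_less_imp_less)
    then show "ys 0 \<in> {-r<..<r}" by auto
  qed
  have "measure ?M {ys \<in> space ?M. emp_sq N ys / rho < d} \<le> measure ?M {ys \<in> space ?M. ys 0 \<in> {-r<..<r}}"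
  proof (rule P.finite_measure_mono[OF sub])
    have "(\<lambda>ys. ys 0) \<in> borel_measurable ?M" using N by (intro comp_meas) auto
    then show "{ys \<in> space ?M. ys 0 \<in> {-r<..<r}} \<in> sets ?M" by (rule pre_sets) simp
  qed
  also have "\<dots> = measure (gauss rho) {-r<..<r}"
    using P.emeasure_PiM_Collect_single[of 0 "{-r<..<r}"] N
    by (simp add: measure_def)
  also have "\<dots> \<le> 2 * r / sqrt rho" by (rule gauss_upper[OF rho r0])
  also have "\<dots> = 2 * sqrt (real N * d)" unfolding r_def using rho by (simp add: real_sqrt_mult)
  finally show ?thesis .
qed

lemma prob_big:
  assumes rho: "0 < rho" and N: "1 \<le> N"
  shows "(exp (-1) / 18) ^ N \<le> measure (PiM {..<N} (\<lambda>_. gauss rho))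
     {ys \<in> space (PiM {..<N} (\<lambda>_. gauss rho)). emp_sq N ys / rho \<in> {1/4..1/2}}"
proof -
  let ?M = "PiM {..<N} (\<lambda>_. gauss rho)"
  interpret P: finite_product_prob_space "\<lambda>_. gauss rho" "{..<N}" by (rule fpps[OF rho])
  let ?I = "{sqrt rho / 2 .. 2 * sqrt rho / 3}"
  have sub: "PiE {..<N} (\<lambda>_. ?I) \<subseteq> {ys \<in> space ?M. emp_sq N ys / rho \<in> {1/4..1/2}}"
  proof
    fix ys assume ys: "ys \<in> PiE {..<N} (\<lambda>_. ?I)"
    have sp: "ys \<in> space ?M" using ys by (simp add: space_PiM PiE_iff)
    have b: "rho / 4 \<le> (ys i)\<^sup>2 \<and> (ys i)\<^sup>2 \<le> 4 * rho / 9" if i: "i < N" for i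
    proof -
      have yi: "sqrt rho / 2 \<le> ys i" "ys i \<le> 2 * sqrt rho / 3" using ys i by (simp_all add: PiE_iff)
      have "(sqrt rho / 2)\<^sup>2 \<le> (ys i)\<^sup>2" using yi rho by (intro power_mono) auto
      then have 1: "rho / 4 \<le> (ys i)\<^sup>2" using rho by (simp add: power_divide)
      have "(ys i)\<^sup>2 \<le> (2 * sqrt rho / 3)\<^sup>2" using yi rho by (intro power_mono) auto
      then have 2: "(ys i)\<^sup>2 \<le> 4 * rho / 9" using rho by (simp add: power_divide power_mult_distrib)
      show ?thesis using 1 2 by simp
    qed
    have l0: "(\<Sum>i<N. rho / 4) \<le> (\<Sum>i<N. (ys i)\<^sup>2)" using b by (intro sum_mono) simp
    have u0: "(\<Sum>i<N. (ys i)\<^sup>2) \<le> (\<Sum>i<N. 4 * rho / 9)" using b by (intro sum_mono) simp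
    have l: "real N * rho / 4 \<le> (\<Sum>i<N. (ys i)\<^sup>2)" using l0 by simp
    have u1: "(\<Sum>i<N. (ys i)\<^sup>2) \<le> real N * (4 * rho / 9)" using u0 by simp
    have "real N * (4 * rho / 9) \<le> real N * rho / 2" using rho by simp
    then have u: "(\<Sum>i<N. (ys i)\<^sup>2) \<le> real N * rho / 2" using u1 by linarith
    have Np: "0 < real N" using N by simp
    have e: "emp_sq N ys / rho = (\<Sum>i<N. (ys i)\<^sup>2) / (real N * rho)" unfolding emp_sq_def by simp
    have p: "0 < real N * rho" using Np rho by simp
    have "1/4 \<le> (\<Sum>i<N. (ys i)\<^sup>2) / (real N * rho)" using l p by (simp add: le_divide_eq)
    moreover have "(\<Sum>i<N. (ys i)\<^sup>2) / (real N * rho) \<le> 1/2" using u p by (simp add: divide_le_eq)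
    ultimately have "emp_sq N ys / rho \<in> {1/4..1/2}" unfolding e by simp
    then show "ys \<in> {ys \<in> space ?M. emp_sq N ys / rho \<in> {1/4..1/2}}" using sp by simp
  qed
  have "(exp (-1) / 18) ^ N \<le> (measure (gauss rho) ?I) ^ N"
    using gauss_lower[OF rho] by (intro power_mono) auto
  also have "\<dots> = (\<Prod>i<N. measure (gauss rho) ?I)" by simp
  also have "\<dots> = measure ?M (PiE {..<N} (\<lambda>_. ?I))"
    using P.prob_times[of "\<lambda>_. ?I"] by simp
  also have "\<dots> \<le> measure ?M {ys \<in> space ?M. emp_sq N ys / rho \<in> {1/4..1/2}}"
  proof (rule P.finite_measure_mono[OF sub])
    have "(\<lambda>ys. emp_sq N ys / rho) \<in> borel_measurable ?M" by simp
    then show "{ys \<in> space ?M. emp_sq N ys / rho \<in> {1/4..1/2}} \<in> sets ?M" by (rule pre_sets) simp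
  qed
  finally show ?thesis .
qed



lemma Gf_meas[measurable]: "Gf lam rho \<in> borel_measurable borel"
  unfolding Gf_def a_LBCE_def by measurable

lemma Gf_bounds:
  assumes s: "0 \<le> s" and lam: "0 \<le> lam" and rho: "0 < rho"
  shows "0 \<le> Gf lam rho s \<and> Gf lam rho s \<le> rho + 1"
proof -
  define c where "c = 1 / (lam + 1)"
  have c: "0 < c" unfolding c_def using lam by simp
  define a where "a = s / (s + c)"
  have a0: "0 \<le> a" unfolding a_def using s c by simp
  have a1: "a \<le> 1" unfolding a_def using s c by simp
  have G: "Gf lam rho s = (a - 1)\<^sup>2 * rho + a\<^sup>2" unfolding Gf_def a_def a_LBCE_def c_def ..
  have "(1 - a)\<^sup>2 \<le> 1" using a0 a1 by (intro power_le_one) auto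
  then have h1: "(a - 1)\<^sup>2 \<le> 1" by (simp add: power2_commute)
  have h2: "(a - 1)\<^sup>2 * rho \<le> 1 * rho" using rho h1 by (intro mult_right_mono) auto
  have h3: "a\<^sup>2 \<le> 1" using a0 a1 by (simp add: power_le_one)
  have h4: "0 \<le> (a - 1)\<^sup>2 * rho" using rho by simp
  have h5: "0 \<le> a\<^sup>2" by simp
  show ?thesis unfolding G using h2 h3 h4 h5 by linarith
qed

lemma ind_hb:
  assumes P: "prob_space M" and f: "f \<in> borel_measurable M" and A: "A \<in> sets borel"
  shows "has_bochner_integral M (\<lambda>x. indicator A (f x) :: real) (measure M {x \<in> space M. f x \<in> A})"
proof -
  interpret prob_space M by (rule P)
  have S: "{x \<in> space M. f x \<in> A} \<in> sets M" by (rule pre_sets[OF f A])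
  have "has_bochner_integral M (indicator {x \<in> space M. f x \<in> A}) (measure M {x \<in> space M. f x \<in> A})"
    using has_bochner_integral_real_indicator[OF S] emeasure_finite[of "{x \<in> space M. f x \<in> A}"]
    by (simp add: less_top[symmetric])
  moreover have "has_bochner_integral M (indicator {x \<in> space M. f x \<in> A}) (measure M {x \<in> space M. f x \<in> A})
     \<longleftrightarrow> has_bochner_integral M (\<lambda>x. indicator A (f x) :: real) (measure M {x \<in> space M. f x \<in> A})"
    by (rule has_bochner_integral_cong) (auto simp: indicator_def)
  ultimately show ?thesis by simp
qed



lemma main:
  fixes N :: nat and rho :: real
  assumes N: "1 \<le> N" and rho: "16 < rho"
    and small: "4 * sqrt (real N) * sqrt (sqrt (1/rho)) + 20016 / rho < (exp (-1) / 18) ^ N"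
  shows "BMSE N rho (1/(rho-1)) < BMSE N rho 0"
proof -
  let ?M = "PiM {..<N} (\<lambda>_. gauss rho)"
  have rho0: "0 < rho" using rho by simp
  interpret P: product_prob_space "\<lambda>_. gauss rho" "{..<N}" by (rule pps[OF rho0])
  define e where "e = 1/rho"
  define lam where "lam = 1/(rho-1)"
  have e0: "0 < e" unfolding e_def using rho by simp
  have e16: "e \<le> 1/16" unfolding e_def using rho by (simp add: divide_le_eq)
  have e1: "e < 1" using e16 by simp
  have lam0: "0 < lam" unfolding lam_def using rho by simp
  have c: "1/(lam+1) = 1 - e" unfolding lam_def e_def using rho by (simp add: field_simps)
  have re: "1/e = rho" unfolding e_def by simp
  define T where "T ys = emp_sq N ys / rho" for ys
  define F0 where "F0 ys = Gf 0 rho (emp_sq N ys)" for ys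
  define F1 where "F1 ys = Gf lam rho (emp_sq N ys)" for ys
  define R where "R ys = e\<^sup>2 * (2 - 2 * T ys - 20016 * e) + e\<^sup>2 * indicator {1/4..1/2} (T ys)
      - 2 * e\<^sup>2 * indicator {..<sqrt e} (T ys)" for ys
  have pw: "R ys \<le> F0 ys - F1 ys" for ys
  proof -
    define s where "s = emp_sq N ys"
    define t where "t = T ys"
    have s0: "0 \<le> s" unfolding s_def by (rule emp_nonneg)
    have ts: "t = s * e" unfolding t_def T_def s_def e_def by simp
    have t0: "0 \<le> t" using ts s0 e0 by simp
    have te: "t / e = s" using ts e0 by simp
    have f0: "F0 ys = (1\<^sup>2 * rho + s\<^sup>2) / (s + 1)\<^sup>2"
      unfolding F0_def s_def[symmetric] using Gf_eq[OF s0 _ rho0, of 0] by simp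
    have f1: "F1 ys = ((1-e)\<^sup>2 * rho + s\<^sup>2) / (s + (1-e))\<^sup>2"
      unfolding F1_def s_def[symmetric] using Gf_eq[OF s0 less_imp_le[OF lam0] rho0] c by simp
    have D: "F0 ys - F1 ys = e\<^sup>2 * Kf (1-e) e t"
      using D_eq[OF t0 e0 e1] unfolding f0 f1 te re by simp
    have k: "Kf (1-e) e t - 2*(1-t) \<ge> indicator {1/4..1/2} t - 2 * indicator {..<sqrt e} t - 20016*e"
      by (rule Kpw[OF e0 e16 t0])
    have "e\<^sup>2 * (indicator {1/4..1/2} t - 2 * indicator {..<sqrt e} t - 20016*e) \<le> e\<^sup>2 * (Kf (1-e) e t - 2*(1-t))"
      using k by (intro mult_left_mono) auto
    then show ?thesis unfolding D R_def t_def[symmetric] by (simp add: algebra_simps)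
  qed
  have mT[measurable]: "T \<in> borel_measurable ?M" unfolding T_def by simp
  have mF0: "F0 \<in> borel_measurable ?M" unfolding F0_def by simp
  have mF1: "F1 \<in> borel_measurable ?M" unfolding F1_def by simp
  have bF0: "0 \<le> F0 ys \<and> F0 ys \<le> rho + 1" for ys
    unfolding F0_def using Gf_bounds[OF emp_nonneg _ rho0, of 0] by simp
  have bF1: "0 \<le> F1 ys \<and> F1 ys \<le> rho + 1" for ys
    unfolding F1_def using Gf_bounds[OF emp_nonneg _ rho0, of lam] lam0 by simp
  have iF0: "integrable ?M F0"
    by (rule P.integrable_const_bound[where B="rho + 1"]) (use bF0 mF0 in auto)
  have iF1: "integrable ?M F1"
    by (rule P.integrable_const_bound[where B="rho + 1"]) (use bF1 mF1 in auto)
  define pA where "pA = measure ?M {ys \<in> space ?M. T ys \<in> {1/4..1/2}}"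
  define pB where "pB = measure ?M {ys \<in> space ?M. T ys \<in> {..<sqrt e}}"
  have hT: "has_bochner_integral ?M T 1"
  proof -
    have h: "has_bochner_integral ?M (emp_sq N) rho" using emp_int[OF rho0 N] by (simp add: has_bochner_integral_iff)
    have "has_bochner_integral ?M (\<lambda>ys. emp_sq N ys / rho) (rho / rho)"
      by (rule has_bochner_integral_divide_zero) (rule h)
    then show ?thesis unfolding T_def using rho0 by simp
  qed
  have hA: "has_bochner_integral ?M (\<lambda>ys. indicator {1/4..1/2} (T ys) :: real) pA"
    unfolding pA_def by (rule ind_hb) (auto simp: P.prob_space_axioms)
  have hB: "has_bochner_integral ?M (\<lambda>ys. indicator {..<sqrt e} (T ys) :: real) pB"
    unfolding pB_def by (rule ind_hb) (auto simp: P.prob_space_axioms)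
  have hC: "has_bochner_integral ?M (\<lambda>_. c) c" for c :: real
    using P.P.prob_space by (simp add: has_bochner_integral_iff)
  have hR: "has_bochner_integral ?M R (e\<^sup>2 * (2 - 2 * 1 - 20016 * e) + e\<^sup>2 * pA - 2 * e\<^sup>2 * pB)"
    unfolding R_def
    by (intro has_bochner_integral_diff has_bochner_integral_add has_bochner_integral_mult_right
        hT hA hB hC)
  have pA: "(exp (-1) / 18) ^ N \<le> pA"
    using prob_big[OF rho0 N] unfolding pA_def T_def by simp
  have pB: "pB \<le> 2 * sqrt (real N * sqrt e)"
    using prob_small[OF rho0 N, of "sqrt e"] e0 unfolding pB_def T_def by simp
  have sq: "sqrt (real N * sqrt e) = sqrt (real N) * sqrt (sqrt (1/rho))"
    unfolding e_def by (simp add: real_sqrt_mult)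
  have pos: "0 < e\<^sup>2 * (2 - 2 * 1 - 20016 * e) + e\<^sup>2 * pA - 2 * e\<^sup>2 * pB"
  proof -
    have "4 * sqrt (real N) * sqrt (sqrt (1/rho)) + 20016 * e < pA"
      using small pA unfolding e_def by simp
    then have "2 * pB + 20016 * e < pA" using pB sq by simp
    then have "0 < pA - 2 * pB - 20016 * e" by simp
    then have "0 < e\<^sup>2 * (pA - 2 * pB - 20016 * e)" using e0 by simp
    then show ?thesis by (simp add: algebra_simps)
  qed
  have "integral\<^sup>L ?M R \<le> integral\<^sup>L ?M (\<lambda>ys. F0 ys - F1 ys)"
    by (rule integral_mono) (use hR iF0 iF1 pw in \<open>auto simp: has_bochner_integral_iff\<close>)
  also have "\<dots> = integral\<^sup>L ?M F0 - integral\<^sup>L ?M F1" using iF0 iF1 by simp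
  finally have lt: "integral\<^sup>L ?M F1 < integral\<^sup>L ?M F0"
    using pos hR by (simp add: has_bochner_integral_iff)
  have B0: "BMSE N rho 0 = ennreal (integral\<^sup>L ?M F0)"
    unfolding BMSE_eq[OF rho0] F0_def[symmetric]
    by (rule nn_integral_eq_integral) (use iF0 bF0 in auto)
  have B1: "BMSE N rho (1/(rho-1)) = ennreal (integral\<^sup>L ?M F1)"
    unfolding BMSE_eq[OF rho0] lam_def[symmetric] F1_def[symmetric]
    by (rule nn_integral_eq_integral) (use iF1 bF1 in auto)
  have nn: "0 \<le> integral\<^sup>L ?M F1" using bF1 by (simp add: integral_nonneg)
  show ?thesis unfolding B0 B1 using lt nn by (simp add: ennreal_less_iff)
qed



theorem theorem3:
  fixes N :: nat
  assumes "N \<ge> 1"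
  shows "\<forall>\<^sub>F rho in at_top. \<exists>lam > 0. BMSE N rho lam < BMSE N rho 0"
proof -
  define q :: real where "q = (exp (-1) / 18) ^ N"
  have q0: "0 < q" unfolding q_def by simp
  have sN: "0 < sqrt (real N)" using assms by simp
  define k where "k = q / (8 * sqrt (real N))"
  have k0: "0 < k" unfolding k_def using q0 sN by simp
  define r0 where "r0 = max 17 (max (1 / k^4 + 1) (40032 / q + 1))"
  show ?thesis unfolding eventually_at_top_linorder
  proof (rule exI[where x=r0], intro allI impI)
    fix rho assume r: "r0 \<le> rho"
    have r17: "17 \<le> rho" using r unfolding r0_def by simp
    have rk: "1 / k^4 < rho" using r unfolding r0_def by simp
    have rq: "40032 / q < rho" using r unfolding r0_def by simp
    have rho0: "0 < rho" using r17 by simp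
    have k4: "0 < k^4" using k0 by simp
    have a: "1 / rho < k^4" using rk k4 rho0 by (simp add: divide_less_eq field_simps)
    have b: "20016 / rho < q / 2" using rq q0 rho0 by (simp add: divide_less_eq field_simps)
    have "sqrt (sqrt (1 / rho)) < sqrt (sqrt (k^4))" using a by simp
    also have "sqrt (sqrt (k^4)) = k"
    proof -
      have "k^4 = (k\<^sup>2)\<^sup>2" by simp
      then have "sqrt (k^4) = sqrt ((k\<^sup>2)\<^sup>2)" by simp
      also have "\<dots> = k\<^sup>2" by (rule real_sqrt_abs[THEN trans]) simp
      finally have "sqrt (k^4) = k\<^sup>2" .
      then show ?thesis using k0 by simp
    qed
    finally have c: "sqrt (sqrt (1 / rho)) < k" .
    have "4 * sqrt (real N) * sqrt (sqrt (1 / rho)) < 4 * sqrt (real N) * k"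
      using c sN by simp
    also have "4 * sqrt (real N) * k = q / 2" unfolding k_def using sN by simp
    finally have d: "4 * sqrt (real N) * sqrt (sqrt (1 / rho)) < q / 2" .
    have small: "4 * sqrt (real N) * sqrt (sqrt (1/rho)) + 20016 / rho < (exp (-1) / 18) ^ N"
      using b d unfolding q_def by simp
    have "BMSE N rho (1/(rho-1)) < BMSE N rho 0"
      by (rule main[OF assms _ small]) (use r17 in simp)
    moreover have "0 < 1/(rho-1)" using r17 by simp
    ultimately show "\<exists>lam > 0. BMSE N rho lam < BMSE N rho 0" by blast
  qed
qed


end
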